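(* In the setting described in the context, let $z_j=\frac1n\sum_{i=1}^n -B_\delta'(y_i\mathbf{x}_i^\top\boldsymbol\beta^\star)\,y_ix_{ij}$ for $j=1,\dots,p$, and $z^\star=\max_{j=1,\dots,p}|z_j|$. Then each $z_j$ is sub-Gaussian with variance proxy $\frac{M^2}{n}$, and for all $t>0$, $$P(z^\star>t)\le 2p\exp\Big(\frac{-t^2n}{2M^2}\Big).$$
   Context: Data: $(\mathbf{x}_i,y_i)$, $i=1,\dots,n$, i.i.d. copies of $(\mathbf{x},y)$ with $\mathbf{x}_i=(x_{i1},\dots,x_{ip})\in\mathbb{R}^p$, $y\in\{-1,1\}$. For $\delta>0$, $B_\delta(t)=(1-t)_+$ if $|t-1|>\delta$ and $B_\delta(t)=\frac{1}{8\delta^{3}}\{\frac{(1-t+\delta)^{4}}{2}-(1-t-\delta)(1-t+\delta)^{3}\}$ if $|t-1|\le\delta$. $\boldsymbol\beta^\star$ is the (unique) minimizer of $\mathbb{E}[B_\delta(y\mathbf{x}^\top\boldsymbol\beta)]$. (A3): the columns of the design matrix satisfy $\big(\sum_{i=1}^n x_{ij}^2\big)^{1/2}\le M$ for all $j$. (A4): the conditional densities of $\mathbf{x}$ given $y=1$ and given $y=-1$ are continuous and have finite first moment. A random variable $z$ is sub-Gaussian with variance proxy $\sigma^2$ if $\mathbb{E}[e^{tz}]\le e^{t^2\sigma^2/2}$ for all $t\in\mathbb{R}$. *)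

theory Defs
  imports "HOL-Probability.Probability"
begin

definition Bdelta :: "real \<Rightarrow> real \<Rightarrow> real" where
  "Bdelta \<delta> t =
     (if \<bar>t - 1\<bar> > \<delta> then max (1 - t) 0
      else (1 / (8 * \<delta> ^ 3)) *
           ((1 - t + \<delta>) ^ 4 / 2 - (1 - t - \<delta>) * (1 - t + \<delta>) ^ 3))"

definition subgaussian :: "'w measure \<Rightarrow> ('w \<Rightarrow> real) \<Rightarrow> real \<Rightarrow> bool" where
  "subgaussian P z s2 \<longleftrightarrow>
     z \<in> borel_measurable P \<and>
     (\<forall>t::real. integrable P (\<lambda>\<omega>. exp (t * z \<omega>)) \<and>
        (\<integral>\<omega>. exp (t * z \<omega>) \<partial>P) \<le> exp (t\<^sup>2 * s2 / 2))"

end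

theory Submission
  imports Defs
begin


lemma glue_deriv:
  fixes f g h :: "real \<Rightarrow> real"
  assumes g: "(g has_real_derivative D) (at a)" and h: "(h has_real_derivative D) (at a)"
    and e: "e > 0"
    and fg: "\<And>y. y < a \<Longrightarrow> a - e < y \<Longrightarrow> f y = g y" and fh: "\<And>y. y > a \<Longrightarrow> y < a + e \<Longrightarrow> f y = h y"
    and ga: "f a = g a" and ha: "f a = h a"
  shows "(f has_real_derivative D) (at a)"
proof -
  have gl: "((\<lambda>y. (g y - g a) / (y - a)) \<longlongrightarrow> D) (at_left a)"
    using g unfolding has_field_derivative_iff by (rule filterlim_mono) (simp_all add: at_le)
  have hl: "((\<lambda>y. (h y - h a) / (y - a)) \<longlongrightarrow> D) (at_right a)"
    using h unfolding has_field_derivative_iff by (rule filterlim_mono) (simp_all add: at_le)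
  have 1: "((\<lambda>y. (f y - f a) / (y - a)) \<longlongrightarrow> D) (at_left a)"
    using gl by (rule Lim_transform_eventually) (use e in \<open>auto simp: fg ga eventually_at_left_field intro!: exI[of _ "a - e"]\<close>)
  have 2: "((\<lambda>y. (f y - f a) / (y - a)) \<longlongrightarrow> D) (at_right a)"
    using hl by (rule Lim_transform_eventually) (use e in \<open>auto simp: fh ha eventually_at_right_field intro!: exI[of _ "a + e"]\<close>)
  show ?thesis unfolding has_field_derivative_iff using 1 2 by (simp add: filterlim_at_split)
qed

definition Dd :: "real \<Rightarrow> real \<Rightarrow> real" where
  "Dd \<delta> t = (if t < 1 - \<delta> then -1 else if t > 1 + \<delta> then 0
     else - ((1 - t + \<delta>)^2 * (4 * \<delta> - 2 * (1 - t))) / (8 * \<delta>^3))"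

definition D2 :: "real \<Rightarrow> real \<Rightarrow> real" where
  "D2 \<delta> t = (if t < 1 - \<delta> then 0 else if t > 1 + \<delta> then 0
     else 3 * (1 - t + \<delta>) * (\<delta> - (1 - t)) / (4 * \<delta>^3))"

definition Pd :: "real \<Rightarrow> real \<Rightarrow> real" where
  "Pd \<delta> t = (1 / (8 * \<delta> ^ 3)) * ((1 - t + \<delta>) ^ 4 / 2 - (1 - t - \<delta>) * (1 - t + \<delta>) ^ 3)"

definition Qd :: "real \<Rightarrow> real \<Rightarrow> real" where
  "Qd \<delta> t = - ((1 - t + \<delta>)^2 * (4 * \<delta> - 2 * (1 - t))) / (8 * \<delta>^3)"

lemma Pd_deriv: "\<delta> > 0 \<Longrightarrow> (Pd \<delta> has_real_derivative Qd \<delta> t) (at t)"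
  unfolding Pd_def Qd_def
  apply (rule derivative_eq_intros refl | simp)+
  apply (simp add: field_simps power2_eq_square power3_eq_cube)
  done

lemma Qd_deriv: "\<delta> > 0 \<Longrightarrow> (Qd \<delta> has_real_derivative 3 * (1 - t + \<delta>) * (\<delta> - (1 - t)) / (4 * \<delta>^3)) (at t)"
  unfolding Qd_def
  apply (rule derivative_eq_intros refl | simp)+
  apply (simp add: field_simps power2_eq_square power3_eq_cube)
  apply (simp add: algebra_simps power2_eq_square power3_eq_cube numeral_eq_Suc)
  done

lemma B_eq:
  assumes "\<delta> > 0"
  shows "Bdelta \<delta> t = (if t < 1 - \<delta> then 1 - t else if t > 1 + \<delta> then 0 else Pd \<delta> t)"
  using assms unfolding Bdelta_def Pd_def by (auto simp: abs_if max_def)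

lemma B_deriv:
  assumes d: "\<delta> > 0"
  shows "(Bdelta \<delta> has_real_derivative Dd \<delta> t) (at t)"
proof -
  have Pa: "Pd \<delta> (1 - \<delta>) = \<delta>" "Pd \<delta> (1 + \<delta>) = 0" using d
    by (simp_all add: Pd_def field_simps power2_eq_square power3_eq_cube numeral_eq_Suc)
  have Qa: "Qd \<delta> (1 - \<delta>) = -1" "Qd \<delta> (1 + \<delta>) = 0" using d
    by (simp_all add: Qd_def field_simps power2_eq_square power3_eq_cube numeral_eq_Suc)
  consider "t < 1 - \<delta>" | "t = 1 - \<delta>" | "1 - \<delta> < t \<and> t < 1 + \<delta>" | "t = 1 + \<delta>" | "t > 1 + \<delta>"
    by linarith
  then show ?thesis
  proof cases
    case 1
    have "Dd \<delta> t = -1" using 1 by (simp add: Dd_def)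
    moreover have "((\<lambda>t. 1 - t) has_real_derivative -1) (at t)" by (auto intro!: derivative_eq_intros)
    ultimately have "((\<lambda>t. 1 - t) has_real_derivative Dd \<delta> t) (at t)" by simp
    then show ?thesis
      by (rule has_field_derivative_transform_within_open[where S="{..<1-\<delta>}"])
         (use 1 d in \<open>auto simp: B_eq Dd_def\<close>)
  next
    case 5
    have "Dd \<delta> t = 0" using 5 d by (simp add: Dd_def)
    moreover have "((\<lambda>t. 0) has_real_derivative 0) (at t)" by (auto intro!: derivative_eq_intros)
    ultimately have "((\<lambda>t. 0) has_real_derivative Dd \<delta> t) (at t)" by simp
    then show ?thesis
      by (rule has_field_derivative_transform_within_open[where S="{1+\<delta><..}"])
         (use 5 d in \<open>auto simp: B_eq Dd_def\<close>)
  next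
    case 3
    have "Dd \<delta> t = Qd \<delta> t" using 3 by (simp add: Dd_def Qd_def)
    then have "(Pd \<delta> has_real_derivative Dd \<delta> t) (at t)" using Pd_deriv[OF d] by simp
    then show ?thesis
      by (rule has_field_derivative_transform_within_open[where S="{1-\<delta><..<1+\<delta>}"])
         (use 3 d in \<open>auto simp: B_eq Dd_def Qd_def\<close>)
  next
    case 2
    have "Dd \<delta> t = Qd \<delta> t" using 2 d by (simp add: Dd_def Qd_def)
    then have "Dd \<delta> t = -1" using 2 Qa by simp
    moreover have "(Bdelta \<delta> has_real_derivative -1) (at t)"
    proof (rule glue_deriv[where g="\<lambda>t. 1 - t" and h="Pd \<delta>" and e=\<delta>])
      show "((\<lambda>t. 1 - t) has_real_derivative -1) (at t)" by (auto intro!: derivative_eq_intros)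
      show "(Pd \<delta> has_real_derivative -1) (at t)" using Pd_deriv[OF d, of t] 2 Qa by simp
      show "\<delta> > 0" by (rule d)
      show "\<And>y. y < t \<Longrightarrow> t - \<delta> < y \<Longrightarrow> Bdelta \<delta> y = (\<lambda>t. 1 - t) y" using 2 d by (simp add: B_eq)
      show "\<And>y. y > t \<Longrightarrow> y < t + \<delta> \<Longrightarrow> Bdelta \<delta> y = Pd \<delta> y" using 2 d by (simp add: B_eq)
      show "Bdelta \<delta> t = (\<lambda>t. 1 - t) t" using 2 d Pa by (simp add: B_eq)
      show "Bdelta \<delta> t = Pd \<delta> t" using 2 d Pa by (simp add: B_eq)
    qed
    ultimately show ?thesis by simp
  next
    case 4
    have "Dd \<delta> t = Qd \<delta> t" using 4 d by (simp add: Dd_def Qd_def)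
    then have "Dd \<delta> t = 0" using 4 Qa by simp
    moreover have "(Bdelta \<delta> has_real_derivative 0) (at t)"
    proof (rule glue_deriv[where h="\<lambda>t. 0" and g="Pd \<delta>" and e=\<delta>])
      show "((\<lambda>t. 0) has_real_derivative 0) (at t)" by (auto intro!: derivative_eq_intros)
      show "(Pd \<delta> has_real_derivative 0) (at t)" using Pd_deriv[OF d, of t] 4 Qa by simp
      show "\<delta> > 0" by (rule d)
      show "\<And>y. y < t \<Longrightarrow> t - \<delta> < y \<Longrightarrow> Bdelta \<delta> y = Pd \<delta> y" using 4 d by (simp add: B_eq)
      show "\<And>y. y > t \<Longrightarrow> y < t + \<delta> \<Longrightarrow> Bdelta \<delta> y = (\<lambda>t. 0) y" using 4 d by (simp add: B_eq)
      show "Bdelta \<delta> t = Pd \<delta> t" using 4 d Pa by (simp add: B_eq)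
      show "Bdelta \<delta> t = (\<lambda>t. 0) t" using 4 d Pa by (simp add: B_eq)
    qed
    ultimately show ?thesis by simp
  qed
qed

lemma Dd_deriv:
  assumes d: "\<delta> > 0"
  shows "(Dd \<delta> has_real_derivative D2 \<delta> t) (at t)"
proof -
  have Dd_eq: "Dd \<delta> t = (if t < 1 - \<delta> then -1 else if t > 1 + \<delta> then 0 else Qd \<delta> t)" for t
    by (simp add: Dd_def Qd_def)
  have Qa: "Qd \<delta> (1 - \<delta>) = -1" "Qd \<delta> (1 + \<delta>) = 0" using d
    by (simp_all add: Qd_def field_simps power2_eq_square power3_eq_cube numeral_eq_Suc)
  consider "t < 1 - \<delta>" | "t = 1 - \<delta>" | "1 - \<delta> < t \<and> t < 1 + \<delta>" | "t = 1 + \<delta>" | "t > 1 + \<delta>"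
    by linarith
  then show ?thesis
  proof cases
    case 1
    have "D2 \<delta> t = 0" using 1 by (simp add: D2_def)
    moreover have "((\<lambda>t. -1) has_real_derivative 0) (at t)" by (auto intro!: derivative_eq_intros)
    ultimately have "((\<lambda>t. -1) has_real_derivative D2 \<delta> t) (at t)" by simp
    then show ?thesis
      by (rule has_field_derivative_transform_within_open[where S="{..<1-\<delta>}"])
         (use 1 d in \<open>auto simp: Dd_eq D2_def\<close>)
  next
    case 5
    have "D2 \<delta> t = 0" using 5 d by (simp add: D2_def)
    moreover have "((\<lambda>t. 0) has_real_derivative 0) (at t)" by (auto intro!: derivative_eq_intros)
    ultimately have "((\<lambda>t. 0) has_real_derivative D2 \<delta> t) (at t)" by simp
    then show ?thesis
      by (rule has_field_derivative_transform_within_open[where S="{1+\<delta><..}"])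
         (use 5 d in \<open>auto simp: Dd_eq D2_def\<close>)
  next
    case 3
    have "(Qd \<delta> has_real_derivative D2 \<delta> t) (at t)" using Qd_deriv[OF d, of t] 3 by (simp add: D2_def)
    then show ?thesis
      by (rule has_field_derivative_transform_within_open[where S="{1-\<delta><..<1+\<delta>}"])
         (use 3 d in \<open>auto simp: Dd_eq D2_def\<close>)
  next
    case 2
    have "D2 \<delta> t = 0" using 2 d by (simp add: D2_def)
    moreover have "(Dd \<delta> has_real_derivative 0) (at t)"
    proof (rule glue_deriv[where g="\<lambda>t. -1" and h="Qd \<delta>" and e=\<delta>])
      show "((\<lambda>t. -1) has_real_derivative 0) (at t)" by (auto intro!: derivative_eq_intros)
      show "(Qd \<delta> has_real_derivative 0) (at t)" using Qd_deriv[OF d, of t] 2 by simp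
      show "\<delta> > 0" by (rule d)
      show "\<And>y. y < t \<Longrightarrow> t - \<delta> < y \<Longrightarrow> Dd \<delta> y = (\<lambda>t. -1) y" using 2 d by (simp add: Dd_eq)
      show "\<And>y. y > t \<Longrightarrow> y < t + \<delta> \<Longrightarrow> Dd \<delta> y = Qd \<delta> y" using 2 d by (simp add: Dd_eq)
      show "Dd \<delta> t = (\<lambda>t. -1) t" using 2 d Qa by (simp add: Dd_eq)
      show "Dd \<delta> t = Qd \<delta> t" using 2 d Qa by (simp add: Dd_eq)
    qed
    ultimately show ?thesis by simp
  next
    case 4
    have "D2 \<delta> t = 0" using 4 d by (simp add: D2_def)
    moreover have "(Dd \<delta> has_real_derivative 0) (at t)"
    proof (rule glue_deriv[where h="\<lambda>t. 0" and g="Qd \<delta>" and e=\<delta>])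
      show "((\<lambda>t. 0) has_real_derivative 0) (at t)" by (auto intro!: derivative_eq_intros)
      show "(Qd \<delta> has_real_derivative 0) (at t)" using Qd_deriv[OF d, of t] 4 by simp
      show "\<delta> > 0" by (rule d)
      show "\<And>y. y < t \<Longrightarrow> t - \<delta> < y \<Longrightarrow> Dd \<delta> y = Qd \<delta> y" using 4 d by (simp add: Dd_eq)
      show "\<And>y. y > t \<Longrightarrow> y < t + \<delta> \<Longrightarrow> Dd \<delta> y = (\<lambda>t. 0) y" using 4 d by (simp add: Dd_eq)
      show "Dd \<delta> t = Qd \<delta> t" using 4 d Qa by (simp add: Dd_eq)
      show "Dd \<delta> t = (\<lambda>t. 0) t" using 4 d Qa by (simp add: Dd_eq)
    qed
    ultimately show ?thesis by simp
  qed
qed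

lemma mvt_any:
  fixes f f' :: "real \<Rightarrow> real"
  assumes "\<And>x. DERIV f x :> f' x"
  shows "\<exists>z. \<bar>z - a\<bar> \<le> \<bar>b - a\<bar> \<and> f b - f a = (b - a) * f' z"
proof -
  consider "a < b" | "a = b" | "b < a" by linarith
  then show ?thesis
  proof cases
    case 1
    from MVT2[OF 1 assms] obtain z where "a < z" "z < b" "f b - f a = (b - a) * f' z" by blast
    then show ?thesis by (intro exI[of _ z]) auto
  next
    case 2 then show ?thesis by auto
  next
    case 3
    from MVT2[OF 3 assms] obtain z where "b < z" "z < a" "f a - f b = (a - b) * f' z" by blast
    then show ?thesis by (intro exI[of _ z]) (auto simp: algebra_simps)
  qed
qed

lemma Dd_bound: assumes d: "\<delta> > 0" shows "\<bar>Dd \<delta> t\<bar> \<le> 1"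
proof (cases "t < 1 - \<delta> \<or> t > 1 + \<delta>")
  case True then show ?thesis by (auto simp: Dd_def)
next
  case False
  define v where "v = 1 - t + \<delta>"
  have v: "0 \<le> v" "v \<le> 2 * \<delta>" using False by (auto simp: v_def)
  have e: "4 * \<delta> - 2 * (1 - t) = 6 * \<delta> - 2 * v" by (simp add: v_def)
  have "8 * \<delta>^3 - v^2 * (6 * \<delta> - 2 * v) = 2 * (v - 2 * \<delta>)^2 * (v + \<delta>)"
    by (simp add: algebra_simps power2_eq_square power3_eq_cube)
  also have "\<dots> \<ge> 0" using v d by simp
  finally have 1: "v^2 * (6 * \<delta> - 2 * v) \<le> 8 * \<delta>^3" by simp
  have 2: "0 \<le> v^2 * (6 * \<delta> - 2 * v)" using v d by simp
  have "Dd \<delta> t = - ((1 - t + \<delta>)^2 * (4 * \<delta> - 2 * (1 - t))) / (8 * \<delta>^3)"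
    using False by (simp add: Dd_def)
  also have "\<dots> = - (v^2 * (6 * \<delta> - 2 * v)) / (8 * \<delta>^3)"
    by (simp only: e v_def[symmetric])
  finally have "Dd \<delta> t = - (v^2 * (6 * \<delta> - 2 * v)) / (8 * \<delta>^3)" .
  moreover have "v^2 * (6 * \<delta> - 2 * v) / (8 * \<delta>^3) \<le> 1" using 1 d by (simp add: divide_le_eq)
  moreover have "0 \<le> v^2 * (6 * \<delta> - 2 * v) / (8 * \<delta>^3)" using 2 d by simp
  ultimately show ?thesis by simp
qed

lemma D2_bound: assumes d: "\<delta> > 0" shows "\<bar>D2 \<delta> t\<bar> \<le> 3 / (4 * \<delta>)"
proof (cases "t < 1 - \<delta> \<or> t > 1 + \<delta>")
  case True then show ?thesis using d by (auto simp: D2_def)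
next
  case False
  define u where "u = 1 - t"
  have u: "-\<delta> \<le> u" "u \<le> \<delta>" using False by (auto simp: u_def)
  have 1: "(u + \<delta>) * (\<delta> - u) \<le> \<delta>^2" by (simp add: algebra_simps power2_eq_square)
  have 2: "0 \<le> (u + \<delta>) * (\<delta> - u)" using u by simp
  have "D2 \<delta> t = 3 * ((u + \<delta>) * (\<delta> - u)) / (4 * \<delta>^3)"
    using False by (simp add: D2_def u_def algebra_simps)
  also have "\<dots> \<le> 3 * \<delta>^2 / (4 * \<delta>^3)" using 1 d by (intro divide_right_mono) auto
  also have "\<dots> = 3 / (4 * \<delta>)" using d by (simp add: field_simps power2_eq_square power3_eq_cube)
  finally show ?thesis using 2 d by (simp add: D2_def)
qed

lemma Dd_lip: assumes d: "\<delta> > 0" shows "\<bar>Dd \<delta> a - Dd \<delta> b\<bar> \<le> 3 / (4 * \<delta>) * \<bar>a - b\<bar>"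
proof -
  obtain z where "Dd \<delta> a - Dd \<delta> b = (a - b) * D2 \<delta> z"
    using mvt_any[of "Dd \<delta>" "D2 \<delta>" b a] Dd_deriv[OF d] by blast
  then have "\<bar>Dd \<delta> a - Dd \<delta> b\<bar> = \<bar>a - b\<bar> * \<bar>D2 \<delta> z\<bar>" by (simp add: abs_mult)
  also have "\<dots> \<le> \<bar>a - b\<bar> * (3 / (4 * \<delta>))" by (intro mult_left_mono D2_bound d) auto
  finally show ?thesis by simp
qed

lemma B_quad: assumes d: "\<delta> > 0"
  shows "Bdelta \<delta> (s + h) - Bdelta \<delta> s \<le> h * Dd \<delta> s + 3 / (4 * \<delta>) * h^2"
proof -
  obtain z where z: "\<bar>z - s\<bar> \<le> \<bar>s + h - s\<bar>" "Bdelta \<delta> (s + h) - Bdelta \<delta> s = (s + h - s) * Dd \<delta> z"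
    using mvt_any[of "Bdelta \<delta>" "Dd \<delta>" s "s + h"] B_deriv[OF d] by blast
  have "h * Dd \<delta> z - h * Dd \<delta> s \<le> \<bar>h\<bar> * \<bar>Dd \<delta> z - Dd \<delta> s\<bar>"
    by (metis abs_ge_self abs_mult right_diff_distrib)
  also have "\<dots> \<le> \<bar>h\<bar> * (3 / (4 * \<delta>) * \<bar>z - s\<bar>)" by (intro mult_left_mono Dd_lip d) auto
  also have "\<dots> \<le> \<bar>h\<bar> * (3 / (4 * \<delta>) * \<bar>h\<bar>)" using z d by (intro mult_left_mono) auto
  also have "\<dots> = 3 / (4 * \<delta>) * h^2" by (simp add: power2_eq_square abs_mult_self)
  finally show ?thesis using z by simp
qed

lemma deriv_B: "\<delta> > 0 \<Longrightarrow> deriv (Bdelta \<delta>) = Dd \<delta>"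
  using B_deriv DERIV_imp_deriv by blast

lemma B_cont: "\<delta> > 0 \<Longrightarrow> continuous_on UNIV (Bdelta \<delta>)"
  using B_deriv DERIV_isCont by (blast intro: continuous_at_imp_continuous_on)

lemma Dd_cont: "\<delta> > 0 \<Longrightarrow> continuous_on UNIV (Dd \<delta>)"
  using Dd_deriv DERIV_isCont by (blast intro: continuous_at_imp_continuous_on)

lemma B_meas[measurable]: "Bdelta \<delta> \<in> borel_measurable borel"
  unfolding Bdelta_def by measurable

lemma Dd_meas[measurable]: "Dd \<delta> \<in> borel_measurable borel"
  unfolding Dd_def by measurable

lemma B_abs_bound: assumes d: "\<delta> > 0" shows "\<bar>Bdelta \<delta> t\<bar> \<le> \<bar>t - 1\<bar> + \<bar>Bdelta \<delta> 1\<bar>"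
proof -
  obtain z where "Bdelta \<delta> t - Bdelta \<delta> 1 = (t - 1) * Dd \<delta> z"
    using mvt_any[of "Bdelta \<delta>" "Dd \<delta>" 1 t] B_deriv[OF d] by blast
  then have "\<bar>Bdelta \<delta> t - Bdelta \<delta> 1\<bar> = \<bar>t - 1\<bar> * \<bar>Dd \<delta> z\<bar>" by (simp add: abs_mult)
  also have "\<dots> \<le> \<bar>t - 1\<bar> * 1" by (intro mult_left_mono Dd_bound d) auto
  finally show ?thesis by (smt (verit))
qed

lemma quad_zero:
  fixes A K m :: real
  assumes h: "\<And>h. 0 \<le> h * A + K * h^2 * m" and K: "K > 0" and m: "m \<ge> 0"
  shows "A = 0"
proof (rule ccontr)
  assume A: "A \<noteq> 0"
  define h where "h = - A / (2 * K * (m + 1))"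
  have q: "2 * K * (m + 1) > 0" using K m by simp
  have Ah: "A = - (2 * K * (m + 1)) * h" using q K m by (simp add: h_def)
  have h0: "h \<noteq> 0" using A Ah by auto
  have "h * A + K * h^2 * m = - (K * h^2 * (m + 2))"
    by (subst Ah) (simp add: algebra_simps power2_eq_square)
  also have "\<dots> < 0" using K m h0 by (simp add: mult_pos_pos)
  finally show False using h[of h] by linarith
qed

lemma hoeff_any:
  assumes P: "prob_space M" and [measurable]: "f \<in> borel_measurable M"
    and ae: "AE x in M. f x \<in> {-c..c}" and E: "prob_space.expectation M f = 0"
  shows "(\<integral>\<^sup>+x. ennreal (exp (l * f x)) \<partial>M) \<le> ennreal (exp (l^2 * c^2 / 2))"
proof -
  interpret prob_space M by fact
  consider "l > 0" | "l = 0" | "l < 0" by linarith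
  then show ?thesis
  proof cases
    case 1
    interpret interval_bounded_random_variable M f "-c" c
      by unfold_locales (use ae in auto)
    have "(\<integral>\<^sup>+x. ennreal (exp (l * f x)) \<partial>M) \<le> ennreal (exp (l\<^sup>2 * (c - (-c))\<^sup>2 / 8))"
      by (rule Hoeffdings_lemma_nn_integral_0[OF 1 E])
    also have "l\<^sup>2 * (c - (-c))\<^sup>2 / 8 = l^2 * c^2 / 2" by (simp add: power2_eq_square)
    finally show ?thesis .
  next
    case 2
    then show ?thesis by (simp add: emeasure_space_1)
  next
    case 3
    interpret interval_bounded_random_variable M "\<lambda>x. - f x" "-c" c
      by unfold_locales (use ae in auto)
    have E': "expectation (\<lambda>x. - f x) = 0" using E by simp
    have "(\<integral>\<^sup>+x. ennreal (exp ((-l) * (- f x))) \<partial>M) \<le> ennreal (exp ((-l)\<^sup>2 * (c - (-c))\<^sup>2 / 8))"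
      by (rule Hoeffdings_lemma_nn_integral_0[OF _ E']) (use 3 in simp)
    also have "(-l)\<^sup>2 * (c - (-c))\<^sup>2 / 8 = l^2 * c^2 / 2" by (simp add: power2_eq_square)
    finally show ?thesis by simp
  qed
qed

lemma subg_tail:
  assumes P: "prob_space M" and sg: "subgaussian M z s" and s: "s > 0" and t: "t > 0"
  shows "measure M {x \<in> space M. z x \<ge> t} \<le> exp (- (t^2) / (2 * s))"
proof -
  interpret prob_space M by fact
  have [measurable]: "z \<in> borel_measurable M" using sg by (simp add: subgaussian_def)
  define l where "l = t / s"
  have l: "l > 0" using s t by (simp add: l_def)
  have int: "integrable M (\<lambda>x. exp (l * z x))" and le: "(\<integral>x. exp (l * z x) \<partial>M) \<le> exp (l^2 * s / 2)"
    using sg by (auto simp: subgaussian_def)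
  have sint: "set_integrable M (space M) (\<lambda>x. exp (l * z x))"
    unfolding set_integrable_def
    by (rule Bochner_Integration.integrable_cong[THEN iffD1, OF refl _ int]) simp
  have "measure M {x \<in> space M. z x \<ge> t} \<le> exp (- l * t) * (\<integral>x\<in>space M. exp (l * z x) \<partial>M)"
    by (rule Chernoff_ineq_ge[OF l sint]) simp
  also have "(\<integral>x\<in>space M. exp (l * z x) \<partial>M) = (\<integral>x. exp (l * z x) \<partial>M)"
    by (rule set_integral_space[OF int])
  also have "exp (- l * t) * \<dots> \<le> exp (- l * t) * exp (l^2 * s / 2)"
    by (intro mult_left_mono le) auto
  also have "\<dots> = exp (- (t^2) / (2 * s))"
    unfolding exp_add[symmetric] using s by (simp add: l_def field_simps power2_eq_square)
  finally show ?thesis .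
qed


theorem lemma2:
  fixes P :: "'w measure"
    and X :: "nat \<Rightarrow> 'w \<Rightarrow> real ^ 'p"
    and Y :: "nat \<Rightarrow> 'w \<Rightarrow> real"
    and n :: nat and \<delta> M :: real
    and \<beta>s :: "real ^ 'p"
  assumes P: "prob_space P"
    and n: "n \<ge> 1"
    and \<delta>: "\<delta> > 0"
    and meas_X: "\<And>i. i < n \<Longrightarrow> X i \<in> borel_measurable P"
    and meas_Y: "\<And>i. i < n \<Longrightarrow> Y i \<in> borel_measurable P"
    and Y_pm: "\<And>i \<omega>. i < n \<Longrightarrow> \<omega> \<in> space P \<Longrightarrow> Y i \<omega> \<in> {-1, 1}"
    and indep: "prob_space.indep_vars P (\<lambda>_. borel) (\<lambda>i \<omega>. (X i \<omega>, Y i \<omega>)) {..<n}"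
    and ident: "\<And>i. i < n \<Longrightarrow>
       distr P borel (\<lambda>\<omega>. (X i \<omega>, Y i \<omega>)) = distr P borel (\<lambda>\<omega>. (X 0 \<omega>, Y 0 \<omega>))"
    and beta_min: "\<And>\<beta>. (\<integral>\<omega>. Bdelta \<delta> (Y 0 \<omega> * (X 0 \<omega> \<bullet> \<beta>s)) \<partial>P)
                        \<le> (\<integral>\<omega>. Bdelta \<delta> (Y 0 \<omega> * (X 0 \<omega> \<bullet> \<beta>)) \<partial>P)"
    and beta_unique: "\<And>\<beta>. (\<integral>\<omega>. Bdelta \<delta> (Y 0 \<omega> * (X 0 \<omega> \<bullet> \<beta>)) \<partial>P)
                        \<le> (\<integral>\<omega>. Bdelta \<delta> (Y 0 \<omega> * (X 0 \<omega> \<bullet> \<beta>s)) \<partial>P) \<Longrightarrow> \<beta> = \<beta>s"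
    and A3: "AE \<omega> in P. \<forall>j. sqrt (\<Sum>i<n. (X i \<omega> $ j)\<^sup>2) \<le> M"
    and A4: "\<And>c. c \<in> {-1, 1::real} \<Longrightarrow>
       \<exists>f :: real ^ 'p \<Rightarrow> real.
          continuous_on UNIV f \<and> (\<forall>x. f x \<ge> 0) \<and>
          (\<integral>\<^sup>+ x. ennreal (f x) \<partial>lborel) = 1 \<and>
          integrable lborel (\<lambda>x. norm x * f x) \<and>
          (\<forall>A \<in> sets borel.
             emeasure P {\<omega> \<in> space P. X 0 \<omega> \<in> A \<and> Y 0 \<omega> = c}
             = emeasure P {\<omega> \<in> space P. Y 0 \<omega> = c} * (\<integral>\<^sup>+ x\<in>A. ennreal (f x) \<partial>lborel))"
  defines "z \<equiv> \<lambda>j \<omega>. (1 / real n) *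
              (\<Sum>i<n. - deriv (Bdelta \<delta>) (Y i \<omega> * (X i \<omega> \<bullet> \<beta>s)) * Y i \<omega> * (X i \<omega> $ j))"
  shows "(\<forall>j. subgaussian P (z j) (M\<^sup>2 / real n)) \<and>
         (\<forall>t > 0. measure P {\<omega> \<in> space P. Max ((\<lambda>j. \<bar>z j \<omega>\<bar>) ` UNIV) > t}
                   \<le> 2 * real CARD('p) * exp (- t\<^sup>2 * real n / (2 * M\<^sup>2)))"
proof -
  interpret prob_space P by (rule P)
  have vnth[measurable]: "(\<lambda>x::real^'p. x $ k) \<in> borel_measurable borel" for k
    by (intro borel_measurable_continuous_onI continuous_intros)
  have dB: "deriv (Bdelta \<delta>) = Dd \<delta>" using deriv_B \<delta> by blast
  define g where "g j = (\<lambda>p::((real^'p) \<times> real). - Dd \<delta> (snd p * (fst p \<bullet> \<beta>s)) * snd p * (fst p $ j))" for j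
  define a where "a j i \<omega> = g j (X i \<omega>, Y i \<omega>)" for j i \<omega>
  have z_eq: "z j \<omega> = (1 / real n) * (\<Sum>i<n. a j i \<omega>)" for j \<omega>
    by (simp add: z_def a_def g_def dB)
  have Ddc: "continuous_on S (\<lambda>x. Dd \<delta> (f x))" if "continuous_on S f" for f :: "'a::topological_space \<Rightarrow> real" and S
    using continuous_on_compose2[OF Dd_cont[OF \<delta>] that] by blast
  have g_meas[measurable]: "g j \<in> borel_measurable borel" for j
    unfolding g_def by (intro borel_measurable_continuous_onI continuous_intros Ddc)
  have XY_meas[measurable]: "(\<lambda>\<omega>. (X i \<omega>, Y i \<omega>)) \<in> borel_measurable P" if "i < n" for i
    using meas_X[OF that] meas_Y[OF that] by measurable
  have a_meas[measurable]: "a j i \<in> borel_measurable P" if "i < n" for i j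
    unfolding a_def using XY_meas[OF that] by measurable
  have z_meas[measurable]: "z j \<in> borel_measurable P" for j
  proof -
    have "(\<lambda>\<omega>. (1 / real n) * (\<Sum>i<n. a j i \<omega>)) \<in> borel_measurable P"
      using a_meas by (intro borel_measurable_times borel_measurable_const borel_measurable_sum) auto
    then show ?thesis by (simp add: z_eq[abs_def])
  qed
  have Xb: "AE \<omega> in P. \<forall>k. \<bar>X i \<omega> $ k\<bar> \<le> M" if "i < n" for i
    using A3
  proof eventually_elim
    case (elim \<omega>)
    show ?case
    proof
      fix k
      have "\<bar>X i \<omega> $ k\<bar> = sqrt ((X i \<omega> $ k)\<^sup>2)" by simp
      also have "\<dots> \<le> sqrt (\<Sum>i<n. (X i \<omega> $ k)\<^sup>2)"
        using that by (intro real_sqrt_le_mono member_le_sum) auto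
      also have "\<dots> \<le> M" using elim by blast
      finally show "\<bar>X i \<omega> $ k\<bar> \<le> M" .
    qed
  qed
  have Yb: "\<bar>Y i \<omega>\<bar> = 1" if "i < n" "\<omega> \<in> space P" for i \<omega>
    using Y_pm[OF that] by auto
  have a_bd: "AE \<omega> in P. a j i \<omega> \<in> {-M..M}" if i: "i < n" for i j
    using Xb[OF i] AE_space
  proof eventually_elim
    case (elim \<omega>)
    have "\<bar>a j i \<omega>\<bar> = \<bar>Dd \<delta> (Y i \<omega> * (X i \<omega> \<bullet> \<beta>s))\<bar> * \<bar>Y i \<omega>\<bar> * \<bar>X i \<omega> $ j\<bar>"
      by (simp add: a_def g_def abs_mult)
    also have "\<dots> \<le> 1 * 1 * M"
      using elim Yb[OF i] Dd_bound[OF \<delta>] by (intro mult_mono) auto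
    finally show ?case by auto
  qed
  have E0: "expectation (a j 0) = 0" for j
  proof -
    have n0: "0 < n" using n by simp
    define s where "s \<omega> = Y 0 \<omega> * (X 0 \<omega> \<bullet> \<beta>s)" for \<omega>
    define c where "c \<omega> = Y 0 \<omega> * (X 0 \<omega> $ j)" for \<omega>
    have [measurable]: "X 0 \<in> borel_measurable P" "Y 0 \<in> borel_measurable P"
      using meas_X meas_Y n0 by auto
    have s_meas[measurable]: "s \<in> borel_measurable P" unfolding s_def by measurable
    have c_meas[measurable]: "c \<in> borel_measurable P" unfolding c_def by measurable
    define R where "R = real CARD('p) * M * norm \<beta>s"
    have bnd: "AE \<omega> in P. \<bar>s \<omega>\<bar> \<le> R \<and> \<bar>c \<omega>\<bar> \<le> M"
      using Xb[OF n0] AE_space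
    proof eventually_elim
      case (elim \<omega>)
      have Y1: "\<bar>Y 0 \<omega>\<bar> = 1" using Yb[OF n0 elim(2)] .
      have "norm (X 0 \<omega>) \<le> (\<Sum>k\<in>UNIV. \<bar>X 0 \<omega> $ k\<bar>)" by (rule norm_le_l1_cart)
      also have "\<dots> \<le> real CARD('p) * M"
        using elim(1) sum_bounded_above[of UNIV "\<lambda>k. \<bar>X 0 \<omega> $ k\<bar>" M] by simp
      finally have nX: "norm (X 0 \<omega>) \<le> real CARD('p) * M" .
      have "\<bar>s \<omega>\<bar> = \<bar>X 0 \<omega> \<bullet> \<beta>s\<bar>" using Y1 by (simp add: s_def abs_mult)
      also have "\<dots> \<le> norm (X 0 \<omega>) * norm \<beta>s" by (rule Cauchy_Schwarz_ineq2)
      also have "\<dots> \<le> real CARD('p) * M * norm \<beta>s" using nX by (intro mult_right_mono) auto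
      finally have "\<bar>s \<omega>\<bar> \<le> R" by (simp add: R_def)
      moreover have "\<bar>c \<omega>\<bar> \<le> M" using Y1 elim(1) by (simp add: c_def abs_mult)
      ultimately show ?case by simp
    qed
    define L where "L = 3 / (4 * \<delta>)"
    have L: "L > 0" using \<delta> by (simp add: L_def)
    have intB: "integrable P (\<lambda>\<omega>. Bdelta \<delta> (s \<omega> + h * c \<omega>))" for h
    proof (rule integrable_const_bound[where B = "R + \<bar>h\<bar> * M + 1 + \<bar>Bdelta \<delta> 1\<bar>"])
      show "AE \<omega> in P. norm (Bdelta \<delta> (s \<omega> + h * c \<omega>)) \<le> R + \<bar>h\<bar> * M + 1 + \<bar>Bdelta \<delta> 1\<bar>"
        using bnd
      proof eventually_elim
        case (elim \<omega>)
        have "\<bar>h * c \<omega>\<bar> \<le> \<bar>h\<bar> * M" using elim by (simp add: abs_mult mult_left_mono)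
        then have "\<bar>s \<omega> + h * c \<omega> - 1\<bar> \<le> R + \<bar>h\<bar> * M + 1" using elim by linarith
        then show ?case using B_abs_bound[OF \<delta>, of "s \<omega> + h * c \<omega>"] by simp
      qed
    qed measurable
    have intD: "integrable P (\<lambda>\<omega>. Dd \<delta> (s \<omega>) * c \<omega>)"
    proof (rule integrable_const_bound[where B = M])
      show "AE \<omega> in P. norm (Dd \<delta> (s \<omega>) * c \<omega>) \<le> M"
        using bnd
      proof eventually_elim
        case (elim \<omega>)
        have "\<bar>Dd \<delta> (s \<omega>)\<bar> * \<bar>c \<omega>\<bar> \<le> 1 * M"
          using elim Dd_bound[OF \<delta>] by (intro mult_mono) auto
        then show ?case by (simp add: abs_mult)
      qed
    qed measurable
    have intc: "integrable P (\<lambda>\<omega>. (c \<omega>)\<^sup>2)"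
    proof (rule integrable_const_bound[where B = "M\<^sup>2"])
      show "AE \<omega> in P. norm ((c \<omega>)\<^sup>2) \<le> M\<^sup>2"
        using bnd
      proof eventually_elim
        case (elim \<omega>)
        have "\<bar>c \<omega>\<bar>\<^sup>2 \<le> M\<^sup>2" using elim by (intro power_mono) auto
        then show ?case by simp
      qed
    qed measurable
    define A where "A = expectation (\<lambda>\<omega>. Dd \<delta> (s \<omega>) * c \<omega>)"
    define m where "m = expectation (\<lambda>\<omega>. (c \<omega>)\<^sup>2)"
    have key: "0 \<le> h * A + L * h\<^sup>2 * m" for h
    proof -
      have lin: "Y 0 \<omega> * (X 0 \<omega> \<bullet> (\<beta>s + axis j h)) = s \<omega> + h * c \<omega>" for \<omega>
        by (simp add: s_def c_def inner_add_right inner_axis algebra_simps)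
      have e1: "(\<integral>\<omega>. Bdelta \<delta> (Y 0 \<omega> * (X 0 \<omega> \<bullet> (\<beta>s + axis j h))) \<partial>P)
          = expectation (\<lambda>\<omega>. Bdelta \<delta> (s \<omega> + h * c \<omega>))" by (simp only: lin)
      have e2: "(\<integral>\<omega>. Bdelta \<delta> (Y 0 \<omega> * (X 0 \<omega> \<bullet> \<beta>s)) \<partial>P) = expectation (\<lambda>\<omega>. Bdelta \<delta> (s \<omega>))"
        by (simp add: s_def)
      have "expectation (\<lambda>\<omega>. Bdelta \<delta> (s \<omega>)) \<le> expectation (\<lambda>\<omega>. Bdelta \<delta> (s \<omega> + h * c \<omega>))"
        using beta_min[of "\<beta>s + axis j h"] unfolding e1 e2 .
      then have "0 \<le> expectation (\<lambda>\<omega>. Bdelta \<delta> (s \<omega> + h * c \<omega>)) - expectation (\<lambda>\<omega>. Bdelta \<delta> (s \<omega>))"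
        by simp
      also have "\<dots> = expectation (\<lambda>\<omega>. Bdelta \<delta> (s \<omega> + h * c \<omega>) - Bdelta \<delta> (s \<omega>))"
        using intB[of h] intB[of 0] by (simp add: Bochner_Integration.integral_diff)
      also have "\<dots> \<le> expectation (\<lambda>\<omega>. h * (Dd \<delta> (s \<omega>) * c \<omega>) + L * h\<^sup>2 * (c \<omega>)\<^sup>2)"
      proof (rule integral_mono)
        show "integrable P (\<lambda>\<omega>. Bdelta \<delta> (s \<omega> + h * c \<omega>) - Bdelta \<delta> (s \<omega>))"
          using intB[of h] intB[of 0] by simp
        show "integrable P (\<lambda>\<omega>. h * (Dd \<delta> (s \<omega>) * c \<omega>) + L * h\<^sup>2 * (c \<omega>)\<^sup>2)"
          using intD intc by simp
        fix \<omega>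
        have "Bdelta \<delta> (s \<omega> + h * c \<omega>) - Bdelta \<delta> (s \<omega>) \<le> (h * c \<omega>) * Dd \<delta> (s \<omega>) + L * (h * c \<omega>)\<^sup>2"
          using B_quad[OF \<delta>, of "s \<omega>" "h * c \<omega>"] by (simp add: L_def)
        also have "\<dots> = h * (Dd \<delta> (s \<omega>) * c \<omega>) + L * h\<^sup>2 * (c \<omega>)\<^sup>2"
          by (simp add: algebra_simps power_mult_distrib)
        finally show "Bdelta \<delta> (s \<omega> + h * c \<omega>) - Bdelta \<delta> (s \<omega>) \<le> h * (Dd \<delta> (s \<omega>) * c \<omega>) + L * h\<^sup>2 * (c \<omega>)\<^sup>2" .
      qed
      also have "\<dots> = h * A + L * h\<^sup>2 * m"
        using intD intc by (simp add: A_def m_def)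
      finally show ?thesis .
    qed
    have m0: "m \<ge> 0" unfolding m_def by (rule integral_nonneg_AE) simp
    have "A = 0" by (rule quad_zero[OF key L m0])
    moreover have "a j 0 = (\<lambda>\<omega>. - (Dd \<delta> (s \<omega>) * c \<omega>))"
      by (auto simp: a_def g_def s_def c_def)
    ultimately show ?thesis by (simp add: A_def)
  qed
  have Ei: "expectation (a j i) = 0" if i: "i < n" for i j
  proof -
    have "expectation (a j i) = integral\<^sup>L (distr P borel (\<lambda>\<omega>. (X i \<omega>, Y i \<omega>))) (g j)"
      unfolding a_def by (rule integral_distr[symmetric]) (use i in simp_all)
    also have "\<dots> = integral\<^sup>L (distr P borel (\<lambda>\<omega>. (X 0 \<omega>, Y 0 \<omega>))) (g j)"
      by (simp add: ident[OF i])
    also have "\<dots> = expectation (a j 0)"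
      unfolding a_def by (rule integral_distr) (use n in simp_all)
    finally show ?thesis using E0 by simp
  qed
  have sg: "subgaussian P (z j) (M\<^sup>2 / real n)" for j
  proof -
    have n0: "real n > 0" using n by simp
    have bound: "(\<integral>\<^sup>+\<omega>. ennreal (exp (t * z j \<omega>)) \<partial>P) \<le> ennreal (exp (t\<^sup>2 * (M\<^sup>2 / real n) / 2))" for t
    proof -
      define l where "l = t / real n"
      have "(\<integral>\<^sup>+\<omega>. ennreal (exp (t * z j \<omega>)) \<partial>P) = (\<integral>\<^sup>+\<omega>. (\<Prod>i\<in>{..<n}. ennreal (exp (l * a j i \<omega>))) \<partial>P)"
      proof (rule nn_integral_cong)
        fix \<omega>
        have "t * z j \<omega> = (\<Sum>i<n. l * a j i \<omega>)" by (simp add: z_eq l_def sum_distrib_left)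
        then show "ennreal (exp (t * z j \<omega>)) = (\<Prod>i\<in>{..<n}. ennreal (exp (l * a j i \<omega>)))"
          by (simp add: exp_sum prod_ennreal)
      qed
      also have "\<dots> = (\<Prod>i\<in>{..<n}. \<integral>\<^sup>+\<omega>. ennreal (exp (l * a j i \<omega>)) \<partial>P)"
      proof (rule indep_vars_nn_integral)
        have "indep_vars (\<lambda>_. borel) (\<lambda>i \<omega>. (\<lambda>p. ennreal (exp (l * g j p))) (X i \<omega>, Y i \<omega>)) {..<n}"
          by (rule indep_vars_compose2[OF indep]) measurable
        then show "indep_vars (\<lambda>_. borel) (\<lambda>i \<omega>. ennreal (exp (l * a j i \<omega>))) {..<n}"
          by (simp add: a_def)
      qed auto
      also have "\<dots> \<le> (\<Prod>i\<in>{..<n}. ennreal (exp (l\<^sup>2 * M\<^sup>2 / 2)))"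
        by (intro prod_mono_ennreal hoeff_any[OF P] a_meas a_bd Ei) auto
      also have "\<dots> = ennreal (exp (l\<^sup>2 * M\<^sup>2 / 2) ^ n)"
        by (simp add: ennreal_power)
      also have "exp (l\<^sup>2 * M\<^sup>2 / 2) ^ n = exp (real n * (l\<^sup>2 * M\<^sup>2 / 2))"
        by (rule exp_of_nat_mult[symmetric])
      also have "real n * (l\<^sup>2 * M\<^sup>2 / 2) = t\<^sup>2 * (M\<^sup>2 / real n) / 2"
        using n0 by (simp add: l_def field_simps power2_eq_square)
      finally show ?thesis .
    qed
    show ?thesis unfolding subgaussian_def
    proof (intro conjI allI)
      show "z j \<in> borel_measurable P" by measurable
      fix t
      have m: "(\<lambda>\<omega>. exp (t * z j \<omega>)) \<in> borel_measurable P" by measurable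
      have fin: "(\<integral>\<^sup>+\<omega>. ennreal (exp (t * z j \<omega>)) \<partial>P) < \<infinity>"
        using le_less_trans[OF bound[of t] ennreal_less_top] by simp
      show "integrable P (\<lambda>\<omega>. exp (t * z j \<omega>))"
        by (rule integrableI_nonneg[OF m]) (use fin in auto)
      have "integral\<^sup>L P (\<lambda>\<omega>. exp (t * z j \<omega>)) = enn2real (\<integral>\<^sup>+\<omega>. ennreal (exp (t * z j \<omega>)) \<partial>P)"
        by (rule integral_eq_nn_integral[OF m]) simp
      also have "\<dots> \<le> enn2real (ennreal (exp (t\<^sup>2 * (M\<^sup>2 / real n) / 2)))"
        by (rule enn2real_mono[OF bound]) simp
      also have "\<dots> = exp (t\<^sup>2 * (M\<^sup>2 / real n) / 2)" by simp
      finally show "integral\<^sup>L P (\<lambda>\<omega>. exp (t * z j \<omega>)) \<le> exp (t\<^sup>2 * (M\<^sup>2 / real n) / 2)" .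
    qed
  qed
  have M0: "M \<ge> 0"
  proof (rule ccontr)
    assume nM: "\<not> M \<ge> 0"
    have "AE \<omega> in P. False" using A3
    proof eventually_elim
      case (elim \<omega>)
      have "0 \<le> sqrt (\<Sum>i<n. (X i \<omega> $ undefined)\<^sup>2)" by (simp add: sum_nonneg)
      then show False using elim nM by (meson order_trans linorder_not_le)
    qed
    then show False by (simp add: AE_False)
  qed
  have tail: "measure P {\<omega> \<in> space P. Max ((\<lambda>j. \<bar>z j \<omega>\<bar>) ` UNIV) > t}
                   \<le> 2 * real CARD('p) * exp (- t\<^sup>2 * real n / (2 * M\<^sup>2))" if t: "t > 0" for t
  proof (cases "M = 0")
    case True
    have "measure P {\<omega> \<in> space P. Max ((\<lambda>j. \<bar>z j \<omega>\<bar>) ` UNIV) > t} \<le> 1" by simp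
    also have "1 \<le> 2 * real CARD('p)"
    proof -
      have "CARD('p) > 0" by (simp add: card_gt_0_iff)
      then show ?thesis by linarith
    qed
    finally show ?thesis using True by simp
  next
    case False
    then have Mp: "M > 0" using M0 by simp
    define sv where "sv = M\<^sup>2 / real n"
    have sv: "sv > 0" using Mp n by (simp add: sv_def)
    define Sp where "Sp j = {\<omega> \<in> space P. z j \<omega> \<ge> t}" for j
    define Sm where "Sm j = {\<omega> \<in> space P. - z j \<omega> \<ge> t}" for j
    have Sp_sets[measurable]: "Sp j \<in> sets P" for j unfolding Sp_def by measurable
    have Sm_sets[measurable]: "Sm j \<in> sets P" for j unfolding Sm_def by measurable
    have sgm: "subgaussian P (\<lambda>\<omega>. - z j \<omega>) sv" for j
      using sg[of j] unfolding subgaussian_def sv_def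
    proof (intro conjI allI)
      fix u
      assume h: "z j \<in> borel_measurable P \<and> (\<forall>t. integrable P (\<lambda>\<omega>. exp (t * z j \<omega>)) \<and>
          (\<integral>\<omega>. exp (t * z j \<omega>) \<partial>P) \<le> exp (t\<^sup>2 * (M\<^sup>2 / real n) / 2))"
      then show "(\<lambda>\<omega>. - z j \<omega>) \<in> borel_measurable P" by measurable
      from h have "integrable P (\<lambda>\<omega>. exp ((-u) * z j \<omega>))" by blast
      then show "integrable P (\<lambda>\<omega>. exp (u * - z j \<omega>))" by simp
      from h have "(\<integral>\<omega>. exp ((-u) * z j \<omega>) \<partial>P) \<le> exp ((-u)\<^sup>2 * (M\<^sup>2 / real n) / 2)" by blast
      then show "(\<integral>\<omega>. exp (u * - z j \<omega>) \<partial>P) \<le> exp (u\<^sup>2 * (M\<^sup>2 / real n) / 2)" by simp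
    qed
    have bnd1: "measure P (Sp j) \<le> exp (- (t^2) / (2 * sv))" for j
      unfolding Sp_def by (rule subg_tail[OF P _ sv t]) (use sg[of j] in \<open>simp add: sv_def\<close>)
    have bnd2: "measure P (Sm j) \<le> exp (- (t^2) / (2 * sv))" for j
      unfolding Sm_def by (rule subg_tail[OF P sgm sv t])
    have sub: "{\<omega> \<in> space P. Max ((\<lambda>j. \<bar>z j \<omega>\<bar>) ` UNIV) > t} \<subseteq> (\<Union>j\<in>UNIV. Sp j \<union> Sm j)"
    proof
      fix \<omega> assume "\<omega> \<in> {\<omega> \<in> space P. Max ((\<lambda>j. \<bar>z j \<omega>\<bar>) ` UNIV) > t}"
      then have \<omega>: "\<omega> \<in> space P" "Max ((\<lambda>j. \<bar>z j \<omega>\<bar>) ` UNIV) > t" by auto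
      have "Max ((\<lambda>j. \<bar>z j \<omega>\<bar>) ` UNIV) \<in> (\<lambda>j. \<bar>z j \<omega>\<bar>) ` UNIV"
        by (rule Max_in) auto
      then obtain j where "Max ((\<lambda>j. \<bar>z j \<omega>\<bar>) ` UNIV) = \<bar>z j \<omega>\<bar>" by blast
      with \<omega> have "\<bar>z j \<omega>\<bar> > t" by simp
      then have "\<omega> \<in> Sp j \<union> Sm j" using \<omega>(1) by (auto simp: Sp_def Sm_def abs_if split: if_splits)
      then show "\<omega> \<in> (\<Union>j\<in>UNIV. Sp j \<union> Sm j)" by blast
    qed
    have "measure P {\<omega> \<in> space P. Max ((\<lambda>j. \<bar>z j \<omega>\<bar>) ` UNIV) > t} \<le> measure P (\<Union>j\<in>UNIV. Sp j \<union> Sm j)"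
      by (rule finite_measure_mono[OF sub]) measurable
    also have "\<dots> \<le> (\<Sum>j\<in>UNIV. measure P (Sp j \<union> Sm j))"
      by (rule measure_UNION_le) auto
    also have "\<dots> \<le> (\<Sum>j\<in>(UNIV::'p set). 2 * exp (- (t^2) / (2 * sv)))"
    proof (rule sum_mono)
      fix j :: 'p
      have "measure P (Sp j \<union> Sm j) \<le> measure P (Sp j) + measure P (Sm j)"
        by (rule measure_Un_le) auto
      also have "\<dots> \<le> 2 * exp (- (t^2) / (2 * sv))" using bnd1[of j] bnd2[of j] by simp
      finally show "measure P (Sp j \<union> Sm j) \<le> 2 * exp (- (t^2) / (2 * sv))" .
    qed
    also have "\<dots> = 2 * real CARD('p) * exp (- (t^2) / (2 * sv))" by simp
    also have "- (t^2) / (2 * sv) = - t\<^sup>2 * real n / (2 * M\<^sup>2)"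
      using Mp n by (simp add: sv_def field_simps)
    finally show ?thesis .
  qed
  show ?thesis using sg tail by blast
qed

end
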